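(* The bounded orbits of $\Phi_{\mathrm{Id}}\colon\mathrm{M}\mapsto\mathrm{M}^2$ on $\mathcal{M}(2;\mathbb{C})$ are contained in $\overline{\mathrm{W}^s_{\mathrm{Id}}(\mathbf{0})}$; every element $\mathrm{M}$ of $\overline{\mathrm{W}^s_{\mathrm{Id}}(\mathbf{0})}$ has a bounded orbit, except the matrices whose Jordan form is $\begin{bmatrix}\lambda&1\\0&\lambda\end{bmatrix}$ with $|\lambda|=1$.
   Context: $\mathrm{W}^s_{\mathrm{Id}}(\mathbf{0})=\{\mathrm{M}\in\mathcal{M}(2;\mathbb{C}):\Phi_{\mathrm{Id}}^k(\mathrm{M})\to\mathbf{0}\text{ as }k\to\infty\}$, where $\mathbf{0}$ is the zero matrix; the bar denotes topological closure. *)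

theory Defs
  imports "HOL-Analysis.Analysis"
begin

type_synonym cmat2 = "complex ^ 2 ^ 2"

definition Phi_Id :: "cmat2 \<Rightarrow> cmat2" where
  "Phi_Id M = M ** M"

definition Ws_Id_0 :: "cmat2 set" where
  "Ws_Id_0 = {M. (\<lambda>k. (Phi_Id ^^ k) M) \<longlonglongrightarrow> 0}"

definition bounded_orbit :: "cmat2 \<Rightarrow> bool" where
  "bounded_orbit M \<longleftrightarrow> bounded (range (\<lambda>k. (Phi_Id ^^ k) M))"

definition jordan_block2 :: "complex \<Rightarrow> cmat2" where
  "jordan_block2 l = (\<chi> i j. if i = j then l else if i = 1 \<and> j = 2 then 1 else 0)"

definition has_jordan_form_block :: "cmat2 \<Rightarrow> complex \<Rightarrow> bool" where
  "has_jordan_form_block M l \<longleftrightarrow>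
     (\<exists>P::cmat2. invertible P \<and> M = P ** jordan_block2 l ** matrix_inv P)"

end

theory Submission
  imports Defs begin

lemma mult2: "((A::cmat2) ** B) $ i $ j = A$i$1 * B$1$j + A$i$2 * B$2$j"
  by (simp add: matrix_matrix_mult_def sum_2)

lemma cmat2_eq: "(A::cmat2) = B \<longleftrightarrow> A$1$1 = B$1$1 \<and> A$1$2 = B$1$2 \<and> A$2$1 = B$2$1 \<and> A$2$2 = B$2$2"
  by (simp add: vec_eq_iff forall_2)

lemma mat_nth: "(mat c :: cmat2) $ i $ j = (if i = j then c else 0)"
  by (simp add: mat_def)

lemma two_ne: "(1::2) \<noteq> 2" "(2::2) \<noteq> 1" by simp_all

lemma J_nth: "jordan_block2 l $ 1 $ 1 = l" "jordan_block2 l $ 1 $ 2 = 1"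
   "jordan_block2 l $ 2 $ 1 = 0" "jordan_block2 l $ 2 $ 2 = l"
  by (simp_all add: jordan_block2_def)

primrec mp :: "cmat2 \<Rightarrow> nat \<Rightarrow> cmat2" where
  "mp M 0 = mat 1" | "mp M (Suc n) = M ** mp M n"

lemma mp_add: "mp M (m+n) = mp M m ** mp M n"
  by (induct m) (simp_all add: matrix_mul_assoc)

lemma Phi_iter: "(Phi_Id ^^ k) M = mp M (2^k)"
  by (induct k) (simp_all add: Phi_Id_def mp_add[symmetric] mult_2)

lemma norm_vec_le_sum: "norm (x::'a::real_normed_vector^'n) \<le> sum (\<lambda>i. norm (x$i)) UNIV"
  by (simp add: norm_vec_def L2_set_le_sum)

lemma norm_cmat2_le: "norm (A::cmat2) \<le> cmod (A$1$1) + cmod (A$1$2) + cmod (A$2$1) + cmod (A$2$2)"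
proof -
  have "norm A \<le> norm (A$1) + norm (A$2)" using norm_vec_le_sum[of A] by (simp add: sum_2)
  moreover have "norm (A$1) \<le> cmod (A$1$1) + cmod (A$1$2)" using norm_vec_le_sum[of "A$1"] by (simp add: sum_2)
  moreover have "norm (A$2) \<le> cmod (A$2$1) + cmod (A$2$2)" using norm_vec_le_sum[of "A$2"] by (simp add: sum_2)
  ultimately show ?thesis by linarith
qed

lemma entry_le_norm: "cmod ((A::cmat2)$i$j) \<le> norm A"
proof -
  have "norm (A$i$j) \<le> norm (A$i)" by (rule Finite_Cartesian_Product.norm_nth_le)
  also have "norm (A$i) \<le> norm A" by (rule Finite_Cartesian_Product.norm_nth_le)
  finally show ?thesis .
qed

primrec Pf :: "complex \<Rightarrow> complex \<Rightarrow> nat \<Rightarrow> complex" where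
  "Pf a b 0 = 0" | "Pf a b (Suc n) = a^n + b * Pf a b n"

definition Qf :: "complex \<Rightarrow> complex \<Rightarrow> nat \<Rightarrow> complex" where
  "Qf a b n = (case n of 0 \<Rightarrow> 1 | Suc m \<Rightarrow> - (a*b) * Pf a b m)"

lemma Qf_0[simp]: "Qf a b 0 = 1" and Qf_Suc[simp]: "Qf a b (Suc n) = - (a*b) * Pf a b n"
  by (simp_all add: Qf_def)

lemma PQ: "Pf a b (Suc n) = (a+b) * Pf a b n + Qf a b n"
proof (cases n)
  case 0 then show ?thesis by simp
next
  case (Suc m) then show ?thesis by (simp add: algebra_simps)
qed

lemma root_pow: "a ^ n = Pf a b n * a + Qf a b n"
proof (induct n)
  case 0 then show ?case by simp
next
  case (Suc n)
  have "a ^ Suc n = a * (Pf a b n * a + Qf a b n)" using Suc by (metis power_Suc)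
  also have "\<dots> = Pf a b (Suc n) * a + Qf a b (Suc n)" by (subst PQ) (simp add: algebra_simps)
  finally show ?case .
qed

lemma Pf_diff: "(a - b) * Pf a b n = a^n - b^n"
proof (induct n)
  case 0 then show ?case by simp
next
  case (Suc n)
  have "(a - b) * Pf a b (Suc n) = (a-b)*a^n + b * ((a - b) * Pf a b n)" by (simp add: algebra_simps)
  also have "\<dots> = (a-b)*a^n + b*(a^n-b^n)" using Suc by simp
  finally show ?case by (simp add: algebra_simps)
qed

lemma Pf_eq: "Pf a a (Suc n) = of_nat (Suc n) * a ^ n"
  by (induct n) (simp_all add: algebra_simps)

lemma Pf_bound: assumes "cmod a \<le> r" "cmod b \<le> r"
  shows "cmod (Pf a b (Suc n)) \<le> real (Suc n) * r ^ n"
proof (induct n)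
  case 0 then show ?case by simp
next
  case (Suc n)
  have r: "0 \<le> r" using assms(1) norm_ge_zero order_trans by blast
  have "cmod (Pf a b (Suc (Suc n))) \<le> cmod a ^ Suc n + cmod b * cmod (Pf a b (Suc n))"
    by (metis Pf.simps(2) norm_mult norm_power norm_triangle_ineq)
  also have "\<dots> \<le> r ^ Suc n + r * (real (Suc n) * r ^ n)"
    by (intro add_mono power_mono mult_mono Suc assms) (auto simp: r)
  also have "\<dots> = real (Suc (Suc n)) * r ^ Suc n" by (simp add: algebra_simps)
  finally show ?case .
qed

definition tr2 :: "cmat2 \<Rightarrow> complex" where "tr2 M = M$1$1 + M$2$2"
definition dt2 :: "cmat2 \<Rightarrow> complex" where "dt2 M = M$1$1 * M$2$2 - M$1$2 * M$2$1"
definition scal :: "cmat2 \<Rightarrow> bool" where "scal M \<longleftrightarrow> M$1$2 = 0 \<and> M$2$1 = 0 \<and> M$1$1 = M$2$2"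

lemma mp_closed:
  assumes "a + b = tr2 M" "a * b = dt2 M"
  shows "mp M n $ i $ j = Pf a b n * M$i$j + Qf a b n * (if i = j then 1 else 0)"
proof (induct n arbitrary: i j)
  case 0 then show ?case by (simp add: mat_nth)
next
  case (Suc n)
  have t: "a + b = M$1$1 + M$2$2" and d: "a * b = M$1$1 * M$2$2 - M$1$2 * M$2$1"
    using assms by (simp_all add: tr2_def dt2_def)
  have c11: "mp M (Suc n)$1$1 = Pf a b (Suc n) * M$1$1 + Qf a b (Suc n)"
    by (simp add: mult2 PQ Suc del: Pf.simps) (use t d in algebra)
  have c12: "mp M (Suc n)$1$2 = Pf a b (Suc n) * M$1$2"
    by (simp add: mult2 PQ Suc del: Pf.simps) (use t d in algebra)
  have c21: "mp M (Suc n)$2$1 = Pf a b (Suc n) * M$2$1"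
    by (simp add: mult2 PQ Suc del: Pf.simps) (use t d in algebra)
  have c22: "mp M (Suc n)$2$2 = Pf a b (Suc n) * M$2$2 + Qf a b (Suc n)"
    by (simp add: mult2 PQ Suc del: Pf.simps) (use t d in algebra)
  show ?case using exhaust_2[of i] exhaust_2[of j] c11 c12 c21 c22 by auto
qed

lemma roots_exist: "\<exists>a b. a + b = t \<and> a * b = (d::complex)"
proof -
  define s where "s = csqrt (t^2 - 4*d)"
  have "s^2 = t^2 - 4*d" by (simp add: s_def)
  then have "((t+s)/2) * ((t-s)/2) = d" by (simp add: field_simps power2_eq_square)
  then show ?thesis by (intro exI[of _ "(t+s)/2"] exI[of _ "(t-s)/2"]) (simp add: field_simps)
qed

lemma mp_norm_bound:
  assumes "a + b = tr2 M" "a * b = dt2 M"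
  shows "norm (mp M n) \<le> cmod (Pf a b n) * (cmod (M$1$1) + cmod (M$1$2) + cmod (M$2$1) + cmod (M$2$2)) + 2 * cmod (Qf a b n)"
proof -
  note c = mp_closed[OF assms, of n]
  have "norm (mp M n) \<le> cmod (mp M n$1$1) + cmod (mp M n$1$2) + cmod (mp M n$2$1) + cmod (mp M n$2$2)"
    by (rule norm_cmat2_le)
  also have "\<dots> \<le> (cmod (Pf a b n) * cmod (M$1$1) + cmod (Qf a b n)) + cmod (Pf a b n) * cmod (M$1$2)
      + cmod (Pf a b n) * cmod (M$2$1) + (cmod (Pf a b n) * cmod (M$2$2) + cmod (Qf a b n))"
    unfolding c by (intro add_mono) (auto intro: order_trans[OF norm_triangle_ineq] simp: norm_mult)
  finally show ?thesis by (simp add: algebra_simps)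
qed

lemma pq_helper:
  fixes p q :: complex
  assumes "0 \<le> N" "0 < e" "0 \<le> m" "cmod p * e \<le> 2 * N" "cmod q \<le> N + cmod p * m"
  shows "cmod p \<le> (1 + (2 + 2*m)/e) * N \<and> cmod q \<le> (1 + (2 + 2*m)/e) * N"
proof -
  have p: "cmod p \<le> 2 * N / e" using assms by (simp add: field_simps)
  have "2 * N / e \<le> (1 + (2 + 2*m)/e) * N" using assms by (simp add: field_simps)
  moreover have "N + (2 * N / e) * m \<le> (1 + (2 + 2*m)/e) * N" using assms by (simp add: field_simps)
  moreover have "cmod p * m \<le> (2 * N / e) * m" using mult_right_mono[OF p assms(3)] by simp
  ultimately show ?thesis using p assms(5) by linarith
qed

lemma nonscal_bound:
  assumes "a + b = tr2 M" "a * b = dt2 M" "\<not> scal M"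
  shows "\<exists>C>0. \<forall>n. cmod (Pf a b n) \<le> C * norm (mp M n) \<and> cmod (Qf a b n) \<le> C * norm (mp M n)"
proof -
  note c = mp_closed[OF assms(1,2)]
  let ?N = "\<lambda>n. norm (mp M n)"
  have e: "\<And>n i j. cmod (mp M n $ i $ j) \<le> ?N n" by (rule entry_le_norm)
  consider "M$1$2 \<noteq> 0" | "M$2$1 \<noteq> 0" | "M$1$1 \<noteq> M$2$2" using assms(3) scal_def by blast
  then show ?thesis
  proof cases
    case 1
    let ?C = "1 + (2 + 2 * cmod (M$1$1)) / cmod (M$1$2)"
    have "cmod (Pf a b n) \<le> ?C * ?N n \<and> cmod (Qf a b n) \<le> ?C * ?N n" for n
    proof (rule pq_helper)
      have "cmod (Pf a b n) * cmod (M$1$2) = cmod (mp M n $1$2)" using c[of n 1 2] by (simp add: norm_mult)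
      then show "cmod (Pf a b n) * cmod (M$1$2) \<le> 2 * ?N n" using e[of n 1 2] norm_ge_zero[of "mp M n"] by linarith
      have "Qf a b n = mp M n $1$1 - Pf a b n * M$1$1" using c[of n 1 1] by simp
      then have "cmod (Qf a b n) \<le> cmod (mp M n $1$1) + cmod (Pf a b n) * cmod (M$1$1)"
        by (metis norm_mult norm_triangle_ineq4)
      then show "cmod (Qf a b n) \<le> ?N n + cmod (Pf a b n) * cmod (M$1$1)"
        using e[of n 1 1] by linarith
    qed (use 1 in auto)
    moreover have "?C > 0" by (simp add: add_pos_nonneg 1)
    ultimately show ?thesis by blast
  next
    case 2
    let ?C = "1 + (2 + 2 * cmod (M$1$1)) / cmod (M$2$1)"
    have "cmod (Pf a b n) \<le> ?C * ?N n \<and> cmod (Qf a b n) \<le> ?C * ?N n" for n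
    proof (rule pq_helper)
      have "cmod (Pf a b n) * cmod (M$2$1) = cmod (mp M n $2$1)" using c[of n 2 1] by (simp add: norm_mult)
      then show "cmod (Pf a b n) * cmod (M$2$1) \<le> 2 * ?N n" using e[of n 2 1] norm_ge_zero[of "mp M n"] by linarith
      have "Qf a b n = mp M n $1$1 - Pf a b n * M$1$1" using c[of n 1 1] by simp
      then have "cmod (Qf a b n) \<le> cmod (mp M n $1$1) + cmod (Pf a b n) * cmod (M$1$1)"
        by (metis norm_mult norm_triangle_ineq4)
      then show "cmod (Qf a b n) \<le> ?N n + cmod (Pf a b n) * cmod (M$1$1)"
        using e[of n 1 1] by linarith
    qed (use 2 in auto)
    moreover have "?C > 0" by (simp add: add_pos_nonneg 2)
    ultimately show ?thesis by blast
  next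
    case 3
    let ?C = "1 + (2 + 2 * cmod (M$1$1)) / cmod (M$1$1 - M$2$2)"
    have "cmod (Pf a b n) \<le> ?C * ?N n \<and> cmod (Qf a b n) \<le> ?C * ?N n" for n
    proof (rule pq_helper)
      have "Pf a b n * (M$1$1 - M$2$2) = mp M n $1$1 - mp M n $2$2" using c[of n 1 1] c[of n 2 2]
        by (simp add: algebra_simps)
      then have "cmod (Pf a b n) * cmod (M$1$1 - M$2$2) \<le> cmod (mp M n $1$1) + cmod (mp M n $2$2)"
        by (metis norm_mult norm_triangle_ineq4)
      then show "cmod (Pf a b n) * cmod (M$1$1 - M$2$2) \<le> 2 * ?N n" using e[of n 1 1] e[of n 2 2] by simp
      have "Qf a b n = mp M n $1$1 - Pf a b n * M$1$1" using c[of n 1 1] by simp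
      then have "cmod (Qf a b n) \<le> cmod (mp M n $1$1) + cmod (Pf a b n) * cmod (M$1$1)"
        by (metis norm_mult norm_triangle_ineq4)
      then show "cmod (Qf a b n) \<le> ?N n + cmod (Pf a b n) * cmod (M$1$1)"
        using e[of n 1 1] by linarith
    qed (use 3 in auto)
    moreover have "?C > 0" using 3 by (simp add: add_pos_nonneg)
    ultimately show ?thesis by blast
  qed
qed

lemma mp_scal: "mp (mat c) n = mat (c ^ n)"
  by (induct n) (simp_all add: cmat2_eq mult2 mat_nth)

lemma scal_mat: "scal M \<Longrightarrow> M = mat (M$1$1)"
  by (simp add: scal_def cmat2_eq mat_nth)

lemma pow2_bounded:
  fixes r :: real
  assumes "0 \<le> r" "\<And>k. r ^ (2^k) \<le> B"
  shows "r \<le> 1"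
proof (rule ccontr)
  assume "\<not> r \<le> 1"
  then have r1: "r > 1" by simp
  obtain k :: nat where k: "B / (r - 1) < real k" using reals_Archimedean2 by blast
  have "real k < real (2^k)" by simp
  then have "real k * (r - 1) \<le> real (2^k) * (r - 1)" using r1 by (intro mult_right_mono) auto
  moreover have "1 + real (2^k) * (r - 1) \<le> (1 + (r - 1)) ^ (2^k)"
    using r1 by (intro Bernoulli_inequality) simp
  moreover have "B < real k * (r - 1)" using k r1 by (simp add: field_simps)
  ultimately have "B < r ^ (2^k)" by simp
  with assms(2)[of k] show False by simp
qed

definition Rc :: "cmat2 \<Rightarrow> bool" where
  "Rc M \<longleftrightarrow> (\<forall>x. x^2 - tr2 M * x + dt2 M = 0 \<longrightarrow> cmod x \<le> 1)"

lemma bounded_orbit_iff: "bounded_orbit M \<longleftrightarrow> (\<exists>B. \<forall>k. norm (mp M (2^k)) \<le> B)"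
  by (simp add: bounded_orbit_def bounded_iff Phi_iter)

lemma bounded_Rc:
  assumes "bounded_orbit M" shows "Rc M"
  unfolding Rc_def
proof (intro allI impI)
  fix x assume x: "x^2 - tr2 M * x + dt2 M = 0"
  define b where "b = tr2 M - x"
  have ab: "x + b = tr2 M" "x * b = dt2 M" using x by (simp_all add: b_def algebra_simps power2_eq_square)
  obtain B where B: "\<And>k. norm (mp M (2^k)) \<le> B" using assms bounded_orbit_iff by blast
  have "\<exists>B'. \<forall>k. cmod x ^ (2^k) \<le> B'"
  proof (cases "scal M")
    case True
    define c where "c = M$1$1"
    have M: "M = mat c" using scal_mat[OF True] c_def by simp
    have "tr2 M = 2 * c" "dt2 M = c * c" by (simp_all add: M tr2_def dt2_def mat_nth)
    with x have "(x - c)^2 = 0" by (simp add: power2_eq_square algebra_simps)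
    then have xc: "x = c" by simp
    have "cmod x ^ (2^k) \<le> B" for k
    proof -
      have "cmod x ^ (2^k) = cmod (mp M (2^k) $ 1 $ 1)" by (simp add: M mp_scal mat_nth xc norm_power)
      also have "\<dots> \<le> B" using entry_le_norm B order_trans by blast
      finally show ?thesis .
    qed
    then show ?thesis by blast
  next
    case False
    obtain C where C: "C > 0" "\<And>n. cmod (Pf x b n) \<le> C * norm (mp M n) \<and> cmod (Qf x b n) \<le> C * norm (mp M n)"
      using nonscal_bound[OF ab False] by blast
    have "cmod x ^ (2^k) \<le> C * B * cmod x + C * B" for k
    proof -
      let ?n = "2^k::nat"
      have "cmod x ^ ?n = cmod (Pf x b ?n * x + Qf x b ?n)" by (simp add: root_pow[symmetric] norm_power)
      also have "\<dots> \<le> cmod (Pf x b ?n) * cmod x + cmod (Qf x b ?n)" by (metis norm_mult norm_triangle_ineq)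
      also have "\<dots> \<le> C * B * cmod x + C * B"
      proof (intro add_mono mult_right_mono)
        have "C * norm (mp M ?n) \<le> C * B" using B[of k] C(1) by (intro mult_left_mono) auto
        then show "cmod (Pf x b ?n) \<le> C * B" "cmod (Qf x b ?n) \<le> C * B" using C(2)[of ?n] by linarith+
      qed simp
      finally show ?thesis .
    qed
    then show ?thesis by blast
  qed
  then obtain B' where "\<And>k. cmod x ^ (2^k) \<le> B'" by blast
  then show "cmod x \<le> 1" by (intro pow2_bounded[of _ B']) auto
qed

lemma Pf_tendsto0:
  assumes "cmod a < 1" "cmod b < 1"
  shows "Pf a b \<longlonglongrightarrow> 0"
proof -
  define r where "r = max (cmod a) (cmod b)"
  have r: "0 \<le> r" "r < 1" "cmod a \<le> r" "cmod b \<le> r" using assms by (auto simp: r_def le_max_iff_disj)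
  have g: "(\<lambda>n. real n * r ^ n + r ^ n) \<longlonglongrightarrow> 0 + 0"
    by (intro tendsto_add powser_times_n_limit_0[of r, simplified] LIMSEQ_power_zero) (use r in auto)
  have "(\<lambda>n. Pf a b (Suc n)) \<longlonglongrightarrow> 0"
  proof (rule Lim_null_comparison[OF _ g[simplified]])
    show "\<forall>\<^sub>F n in sequentially. norm (Pf a b (Suc n)) \<le> real n * r ^ n + r ^ n"
      using Pf_bound[OF r(3,4)] by (simp add: algebra_simps)
  qed
  then show ?thesis by (rule LIMSEQ_imp_Suc)
qed

lemma Ws_crit:
  assumes "a + b = tr2 A" "a * b = dt2 A" "cmod a < 1" "cmod b < 1"
  shows "A \<in> Ws_Id_0"
proof -
  let ?S = "cmod (A$1$1) + cmod (A$1$2) + cmod (A$2$1) + cmod (A$2$2)"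
  have P: "Pf a b \<longlonglongrightarrow> 0" by (rule Pf_tendsto0[OF assms(3,4)])
  have "(\<lambda>n. Qf a b (Suc n)) \<longlonglongrightarrow> - (a*b) * 0" by (simp only: Qf_Suc) (intro tendsto_mult tendsto_const P)
  then have Q: "Qf a b \<longlonglongrightarrow> 0" using LIMSEQ_imp_Suc[of "Qf a b" 0] by simp
  have g: "(\<lambda>n. cmod (Pf a b n) * ?S + 2 * cmod (Qf a b n)) \<longlonglongrightarrow> 0 * ?S + 2 * 0"
    by (intro tendsto_add tendsto_mult tendsto_const tendsto_norm_zero P Q)
  have "mp A \<longlonglongrightarrow> 0"
    by (rule Lim_null_comparison[OF _ g[simplified]]) (use mp_norm_bound[OF assms(1,2)] in auto)
  then have "(mp A \<circ> (\<lambda>k. 2^k)) \<longlonglongrightarrow> 0"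
    by (rule LIMSEQ_subseq_LIMSEQ) (simp add: strict_mono_def)
  then show ?thesis by (simp add: Ws_Id_0_def Phi_iter o_def)
qed

lemma Rc_roots:
  assumes "Rc M" "a + b = tr2 M" "a * b = dt2 M"
  shows "cmod a \<le> 1" "cmod b \<le> 1"
proof -
  have "a^2 - tr2 M * a + dt2 M = 0" "b^2 - tr2 M * b + dt2 M = 0"
    unfolding assms(2,3)[symmetric] by (simp_all add: algebra_simps power2_eq_square)
  then show "cmod a \<le> 1" "cmod b \<le> 1" using assms(1) unfolding Rc_def by blast+
qed

lemma scaleR_nth: "(s *\<^sub>R (M::cmat2))$i$j = of_real s * M$i$j"
  by (simp only: vector_scaleR_component) (simp add: scaleR_conv_of_real)

lemma tr2_scale: "tr2 (s *\<^sub>R M) = of_real s * tr2 M"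
  by (simp only: tr2_def scaleR_nth) (simp add: algebra_simps)

lemma dt2_scale: "dt2 (s *\<^sub>R M) = of_real s * of_real s * dt2 M"
  by (simp only: dt2_def scaleR_nth) (simp add: algebra_simps)

lemma Rc_closure:
  assumes "Rc M" shows "M \<in> closure Ws_Id_0"
proof -
  obtain a b where ab: "a + b = tr2 M" "a * b = dt2 M" using roots_exist by blast
  note r = Rc_roots[OF assms ab]
  define s where "s n = 1 - inverse (real (Suc n)) / 2" for n
  have s: "0 < s n" "s n < 1" for n
    unfolding s_def by (auto simp: field_simps)
  have "s n *\<^sub>R M \<in> Ws_Id_0" for n
  proof (rule Ws_crit)
    show "of_real (s n) * a + of_real (s n) * b = tr2 (s n *\<^sub>R M)"
      unfolding tr2_scale ab[symmetric] by (simp add: algebra_simps)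
    show "of_real (s n) * a * (of_real (s n) * b) = dt2 (s n *\<^sub>R M)"
      unfolding dt2_scale ab[symmetric] by (simp add: algebra_simps)
    have "cmod (of_real (s n) * a) \<le> s n" "cmod (of_real (s n) * b) \<le> s n"
      using r s[of n] by (auto simp: norm_mult intro: mult_left_le)
    then show "cmod (of_real (s n) * a) < 1" "cmod (of_real (s n) * b) < 1" using s[of n] by linarith+
  qed
  moreover have "(\<lambda>n. s n *\<^sub>R M) \<longlonglongrightarrow> 1 *\<^sub>R M"
  proof (intro tendsto_scaleR tendsto_const)
    have "(\<lambda>n. 1 - inverse (real (Suc n)) / 2) \<longlonglongrightarrow> 1 - 0 / 2"
      by (intro tendsto_diff tendsto_divide tendsto_const LIMSEQ_inverse_real_of_nat) simp
    then show "s \<longlonglongrightarrow> 1" by (simp add: s_def[abs_def])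
  qed
  ultimately show ?thesis unfolding closure_sequential by (intro exI[of _ "\<lambda>n. s n *\<^sub>R M"]) simp
qed

lemma Ws_bounded: "A \<in> Ws_Id_0 \<Longrightarrow> bounded_orbit A"
  unfolding Ws_Id_0_def bounded_orbit_def using convergent_imp_bounded by blast

lemma closure_Rc:
  assumes "M \<in> closure Ws_Id_0" shows "Rc M"
  unfolding Rc_def
proof (intro allI impI; rule ccontr)
  fix y assume y: "y^2 - tr2 M * y + dt2 M = 0" and y1: "\<not> cmod y \<le> 1"
  obtain X where X: "\<And>n. X n \<in> Ws_Id_0" "X \<longlonglongrightarrow> M" using assms closure_sequential by blast
  have Xe: "(\<lambda>n. X n $ i $ j) \<longlonglongrightarrow> M $ i $ j" for i j
    by (intro tendsto_vec_nth X(2))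
  let ?v = "\<lambda>n. y^2 - tr2 (X n) * y + dt2 (X n)"
  have "?v \<longlonglongrightarrow> y^2 - tr2 M * y + dt2 M"
    unfolding tr2_def dt2_def by (intro tendsto_intros Xe)
  then have v0: "(\<lambda>n. norm (?v n)) \<longlonglongrightarrow> 0" using y by (simp add: tendsto_norm_zero)
  have "(cmod y - 1)^2 \<le> norm (?v n)" for n
  proof -
    have Rn: "Rc (X n)" by (rule bounded_Rc[OF Ws_bounded[OF X(1)]])
    obtain a b where ab: "a + b = tr2 (X n)" "a * b = dt2 (X n)" using roots_exist by blast
    note r = Rc_roots[OF Rn ab]
    have "?v n = (y - a) * (y - b)" unfolding ab[symmetric] by (simp add: algebra_simps power2_eq_square)
    then have "norm (?v n) = cmod (y - a) * cmod (y - b)" by (simp add: norm_mult)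
    moreover have "cmod y - 1 \<le> cmod (y - a)" "cmod y - 1 \<le> cmod (y - b)"
      using r norm_triangle_ineq2[of y a] norm_triangle_ineq2[of y b] by linarith+
    ultimately show ?thesis using y1 by (simp add: power2_eq_square mult_mono)
  qed
  then have "(cmod y - 1)^2 \<le> 0" by (intro LIMSEQ_le_const[OF v0]) auto
  with y1 show False by simp
qed

lemma inv_props: "invertible P \<Longrightarrow> P ** matrix_inv P = mat 1 \<and> matrix_inv P ** P = mat 1"
  unfolding invertible_def matrix_inv_def by (rule someI_ex)

lemma tr2_trace: "tr2 M = trace M" by (simp add: tr2_def trace_def sum_2)
lemma dt2_det: "dt2 M = det M" by (simp add: dt2_def det_2)

lemma J1:
  assumes "has_jordan_form_block M l"
  shows "tr2 M = l + l \<and> dt2 M = l * l \<and> \<not> scal M"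
proof -
  obtain P where P: "invertible P" "M = P ** jordan_block2 l ** matrix_inv P"
    using assms has_jordan_form_block_def by blast
  define Q where "Q = matrix_inv P"
  have PQ: "P ** Q = mat 1" "Q ** P = mat 1" using inv_props[OF P(1)] Q_def by auto
  let ?J = "jordan_block2 l"
  have "trace M = trace (Q ** (P ** ?J))" unfolding P(2) Q_def[symmetric] by (rule trace_mul_sym)
  also have "\<dots> = trace ?J" by (simp add: matrix_mul_assoc PQ)
  finally have t: "tr2 M = l + l" by (simp add: tr2_trace[symmetric] tr2_def J_nth)
  have "det M = det P * det ?J * det Q" unfolding P(2) Q_def[symmetric] by (simp add: det_mul)
  also have "\<dots> = det (P ** Q) * det ?J" by (simp add: det_mul)
  finally have d: "dt2 M = l * l" by (simp add: PQ dt2_det[symmetric] dt2_def J_nth mat_nth)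
  have nsc: "\<not> scal M"
  proof
    assume "scal M"
    then have Mc: "M = mat (M$1$1)" by (rule scal_mat)
    define c where "c = M$1$1"
    have "Q ** M ** P = ?J" unfolding P(2) Q_def[symmetric]
      by (simp add: matrix_mul_assoc PQ) (simp add: matrix_mul_assoc[symmetric] PQ)
    then have "(Q ** M ** P) $ 1 $ 2 = 1" by (simp add: J_nth)
    moreover have "(Q ** P)$1$2 = 0" using PQ by (simp add: mat_nth)
    then have "Q$1$1*P$1$2 + Q$1$2*P$2$2 = 0" by (simp add: mult2)
    moreover have "(Q ** M ** P) $1$2 = c * (Q$1$1*P$1$2 + Q$1$2*P$2$2)"
      by (subst Mc) (simp add: mult2 mat_nth algebra_simps c_def)
    ultimately show False by simp
  qed
  show ?thesis using t d nsc by blast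
qed

lemma jordan_from_conj:
  assumes "invertible P" "M ** P = P ** jordan_block2 l"
  shows "has_jordan_form_block M l"
proof -
  have "M = M ** (P ** matrix_inv P)" using inv_props[OF assms(1)] by simp
  also have "\<dots> = P ** jordan_block2 l ** matrix_inv P" by (simp add: matrix_mul_assoc assms(2))
  finally show ?thesis unfolding has_jordan_form_block_def using assms(1) by blast
qed

lemma J2:
  assumes t: "tr2 M = l + l" and d: "dt2 M = l * l" and ns: "\<not> scal M"
  shows "has_jordan_form_block M l"
proof -
  have t': "M$1$1 + M$2$2 = l + l" and d': "M$1$1 * M$2$2 - M$1$2 * M$2$1 = l * l"
    using t d by (simp_all add: tr2_def dt2_def)
  show ?thesis
  proof (cases "M$2$1 = 0")
    case False
    define c where "c = M$2$1"
    define \<alpha> where "\<alpha> = M$1$1 - l"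
    define P :: cmat2 where "P = (\<chi> i j. if i = 1 then (if j = 1 then \<alpha> else 1) else (if j = 1 then c else 0))"
    define Q :: cmat2 where "Q = (\<chi> i j. if i = 1 then (if j = 1 then 0 else 1/c) else (if j = 1 then 1 else - \<alpha>/c))"
    have c0: "c \<noteq> 0" using False c_def by simp
    have "P ** Q = mat 1 \<and> Q ** P = mat 1"
      using c0 by (simp add: cmat2_eq mult2 P_def Q_def mat_nth field_simps)
    then have inv: "invertible P" unfolding invertible_def by blast
    have e11: "M$1$1 * \<alpha> + M$1$2 * c = \<alpha> * l" unfolding \<alpha>_def c_def using t' d' by algebra
    have e21: "c * \<alpha> + M$2$2 * c = c * l" unfolding \<alpha>_def c_def using t' d' by algebra
    have "M ** P = P ** jordan_block2 l"
      using e11 e21 by (simp add: cmat2_eq mult2 P_def J_nth \<alpha>_def c_def)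
    then show ?thesis by (rule jordan_from_conj[OF inv])
  next
    case True
    have "(M$1$1 - l)^2 = 0" using t' d' True by algebra
    then have m1: "M$1$1 = l" by simp
    then have m2: "M$2$2 = l" using t' by simp
    define b where "b = M$1$2"
    have b0: "b \<noteq> 0" using ns True m1 m2 b_def scal_def by simp
    define P :: cmat2 where "P = (\<chi> i j. if i = 1 then (if j = 1 then b else 0) else (if j = 1 then 0 else 1))"
    define Q :: cmat2 where "Q = (\<chi> i j. if i = 1 then (if j = 1 then 1/b else 0) else (if j = 1 then 0 else 1))"
    have "P ** Q = mat 1 \<and> Q ** P = mat 1"
      using b0 by (simp add: cmat2_eq mult2 P_def Q_def mat_nth field_simps)
    then have inv: "invertible P" unfolding invertible_def by blast
    have "M ** P = P ** jordan_block2 l"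
      using True m1 m2 by (simp add: cmat2_eq mult2 P_def J_nth b_def)
    then show ?thesis by (rule jordan_from_conj[OF inv])
  qed
qed

lemma main_bdd:
  assumes R: "Rc M" and nj: "\<not> (\<exists>l. cmod l = 1 \<and> has_jordan_form_block M l)"
  shows "bounded_orbit M"
proof -
  obtain a b where ab: "a + b = tr2 M" "a * b = dt2 M" using roots_exist by blast
  note r = Rc_roots[OF R ab]
  have "\<exists>B. \<forall>n. norm (mp M n) \<le> B"
  proof (cases "scal M")
    case True
    define c where "c = M$1$1"
    have M: "M = mat c" using scal_mat[OF True] c_def by simp
    have "(c + c) = tr2 M" "c * c = dt2 M" by (simp_all add: M tr2_def dt2_def mat_nth)
    note rc = Rc_roots[OF R this]
    have "norm (mp M n) \<le> 2" for n
    proof -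
      have "norm (mp M n) \<le> cmod c ^ n + cmod c ^ n"
        using norm_cmat2_le[of "mp M n"] by (simp add: M mp_scal mat_nth norm_power)
      also have "\<dots> \<le> 1 + 1" using rc by (intro add_mono power_le_one) auto
      finally show ?thesis by simp
    qed
    then show ?thesis by blast
  next
    case False
    let ?S = "cmod (M$1$1) + cmod (M$1$2) + cmod (M$2$1) + cmod (M$2$2)"
    have "\<exists>K. \<forall>n. cmod (Pf a b n) \<le> K"
    proof (cases "a = b")
      case False
      have "cmod (Pf a b n) \<le> 2 / cmod (a - b)" for n
      proof -
        have "cmod (a - b) * cmod (Pf a b n) = cmod (a^n - b^n)" using Pf_diff[of a b n] by (metis norm_mult)
        also have "\<dots> \<le> cmod a ^ n + cmod b ^ n" by (metis norm_power norm_triangle_ineq4)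
        also have "\<dots> \<le> 1 + 1" using r by (intro add_mono power_le_one) auto
        finally show ?thesis using False by (simp add: field_simps mult.commute)
      qed
      then show ?thesis by blast
    next
      case True
      show ?thesis
      proof (cases "cmod a < 1")
        case True
        with \<open>a = b\<close> have "Pf a b \<longlonglongrightarrow> 0" by (intro Pf_tendsto0) auto
        then have "Bseq (Pf a b)" by (intro convergent_imp_Bseq convergentI)
        then show ?thesis by (rule BseqE) blast
      next
        case False
        then have "cmod a = 1" using r by simp
        moreover have "has_jordan_form_block M a"
          using J2[of M a] ab \<open>a = b\<close> \<open>\<not> scal M\<close> by simp
        ultimately show ?thesis using nj by blast
      qed
    qed
    then obtain K where K: "\<And>n. cmod (Pf a b n) \<le> K" by blast
    have Kq: "cmod (Qf a b n) \<le> max 1 K" for n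
    proof (cases n)
      case 0 then show ?thesis by simp
    next
      case (Suc m)
      have "cmod (Qf a b n) = cmod a * cmod b * cmod (Pf a b m)" by (simp add: Suc norm_mult)
      also have "\<dots> \<le> 1 * 1 * K" using r K[of m] by (intro mult_mono) auto
      finally show ?thesis by simp
    qed
    have "norm (mp M n) \<le> K * ?S + 2 * max 1 K" for n
    proof -
      have "norm (mp M n) \<le> cmod (Pf a b n) * ?S + 2 * cmod (Qf a b n)" by (rule mp_norm_bound[OF ab])
      also have "\<dots> \<le> K * ?S + 2 * max 1 K" using K[of n] Kq[of n]
        by (intro add_mono mult_right_mono) auto
      finally show ?thesis .
    qed
    then show ?thesis by blast
  qed
  then show ?thesis unfolding bounded_orbit_iff by blast
qed

lemma jordan_unbdd:
  assumes "has_jordan_form_block M l" "cmod l = 1"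
  shows "\<not> bounded_orbit M"
proof
  assume "bounded_orbit M"
  then obtain B where B: "\<And>k. norm (mp M (2^k)) \<le> B" using bounded_orbit_iff by blast
  have j: "tr2 M = l + l" "dt2 M = l * l" "\<not> scal M" using J1[OF assms(1)] by auto
  have "\<exists>C>0. \<forall>n. cmod (Pf l l n) \<le> C * norm (mp M n) \<and> cmod (Qf l l n) \<le> C * norm (mp M n)"
    using nonscal_bound[of l l M] j by simp
  then obtain C where C: "C > 0" "\<And>n. cmod (Pf l l n) \<le> C * norm (mp M n)" by blast
  obtain k where k: "C * B < 2 ^ k" using real_arch_pow[of 2 "C * B"] by auto
  have "Pf l l (2^k) = of_nat (2^k) * l ^ (2^k - 1)"
    using Pf_eq[of l "2^k - 1"] by simp
  then have "cmod (Pf l l (2^k)) = 2^k" using assms(2) by (simp add: norm_mult norm_power)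
  moreover have "C * norm (mp M (2^k)) \<le> C * B" using B[of k] C(1) by (intro mult_left_mono) auto
  ultimately show False using C(2)[of "2^k"] k by linarith
qed

theorem proposition3p5:
  shows "(\<forall>M. bounded_orbit M \<longrightarrow> M \<in> closure Ws_Id_0) \<and>
         (\<forall>M \<in> closure Ws_Id_0.
            bounded_orbit M \<longleftrightarrow> \<not> (\<exists>l. cmod l = 1 \<and> has_jordan_form_block M l))"
proof (intro conjI allI impI ballI iffI)
  fix M assume "bounded_orbit M"
  then show "M \<in> closure Ws_Id_0" by (intro Rc_closure bounded_Rc)
next
  fix M assume "bounded_orbit M"
  then show "\<not> (\<exists>l. cmod l = 1 \<and> has_jordan_form_block M l)" using jordan_unbdd by blast
next
  fix M assume "M \<in> closure Ws_Id_0" "\<not> (\<exists>l. cmod l = 1 \<and> has_jordan_form_block M l)"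
  then show "bounded_orbit M" by (intro main_bdd closure_Rc)
qed

end
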